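(* Let $u\in L^2(\mu)$. Suppose that for every continuous $\psi:\Omega\to\mathbb R$ and every $e\in\mathcal B$, setting $v(\omega,e')=\psi(\omega)\delta_{e,e'}$, one has $\int_\Omega u(\omega)\,\nabla^{(\omega)*}v(\omega)\,\mu(d\omega)=0$. Then $u$ is constant $\mu$-almost everywhere.
   Context: $d\ge2$, $c_0>0$, $\mathbb E_d$ the non-oriented nearest-neighbour bonds of $\mathbb Z^d$, $\Omega=[0,c_0]^{\mathbb E_d}$ with product topology, $\omega(x,y)=\omega(\{x,y\})$, $\tau_x\omega(\{y,z\})=\omega(\{y+x,z+x\})$. $\mathbb Q$ is a Borel probability on $\Omega$ invariant and ergodic under $(\tau_x)$, and $\mathbb Q$-a.s. the graph formed by bonds with $\omega(b)>0$ has a unique infinite connected component, with vertex set $\mathcal C(\omega)$. $\mathcal B=\{e\in\mathbb Z^d:|e|=1\}$. $\mu(d\omega)=\mathbb 1_{\{0\in\mathcal C(\omega)\}}\mathbb Q(d\omega)$. $\nabla^{(\omega)*}v(\omega)=\sum_{e\in\mathcal B}\omega(0,e)[v(\omega,e)-v(\tau_e\omega,-e)]$. *)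

theory Defs
  imports "HOL-Analysis.Analysis" "HOL-Probability.Probability"
begin

text \<open>Lattice Z^d is int^'n with CARD('n) = d.
 An environment is a function from sets of sites to reals (only values on bonds matter;
 the configuration space Omega requires value 0 off bonds). Topology: product topology
 on the function space (Function_Topology).\<close>

type_synonym 'n site = "int ^ 'n"
type_synonym 'n env = "'n site set \<Rightarrow> real"

definition unit_dirs :: "('n::finite) site set" where
  "unit_dirs = {axis i s | i s. s = 1 \<or> s = -1}"

definition bonds :: "('n::finite) site set set" where
  "bonds = {{x, x + e} | x e. e \<in> unit_dirs}"

definition Omega :: "real \<Rightarrow> ('n::finite) env set" where
  "Omega c0 = {\<omega>. (\<forall>b\<in>bonds. \<omega> b \<in> {0..c0}) \<and> (\<forall>b. b \<notin> bonds \<longrightarrow> \<omega> b = 0)}"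

definition shift :: "('n::finite) site \<Rightarrow> 'n env \<Rightarrow> 'n env" where
  "shift x \<omega> = (\<lambda>b. \<omega> ((\<lambda>y. y + x) ` b))"

definition open_adj :: "('n::finite) env \<Rightarrow> ('n site \<times> 'n site) set" where
  "open_adj \<omega> = {(x, y). {x, y} \<in> bonds \<and> \<omega> {x, y} > 0}"

definition cluster_of :: "('n::finite) env \<Rightarrow> 'n site \<Rightarrow> 'n site set" where
  "cluster_of \<omega> x = {y. (x, y) \<in> (open_adj \<omega>)\<^sup>*}"

definition unique_infinite_cluster :: "('n::finite) env \<Rightarrow> bool" where
  "unique_infinite_cluster \<omega> \<longleftrightarrow> (\<exists>!K. K \<in> range (cluster_of \<omega>) \<and> infinite K)"

text \<open>Vertex set of the infinite cluster (the union of infinite clusters; a.s. the unique one).\<close>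
definition inf_cluster :: "('n::finite) env \<Rightarrow> 'n site set" where
  "inf_cluster \<omega> = {x. infinite (cluster_of \<omega> x)}"

definition shift_invariant :: "('n::finite) env measure \<Rightarrow> bool" where
  "shift_invariant Q \<longleftrightarrow> (\<forall>x. shift x \<in> measurable Q Q \<and> distr Q Q (shift x) = Q)"

definition shift_ergodic :: "('n::finite) env measure \<Rightarrow> bool" where
  "shift_ergodic Q \<longleftrightarrow> (\<forall>A \<in> sets Q. (\<forall>x. shift x -` A \<inter> space Q = A) \<longrightarrow>
      prob_space.prob Q A = 0 \<or> prob_space.prob Q A = 1)"

definition mu :: "('n::finite) env measure \<Rightarrow> 'n env measure" where
  "mu Q = density Q (\<lambda>\<omega>. indicator {\<omega>. 0 \<in> inf_cluster \<omega>} \<omega>)"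

definition nabla_star :: "(('n::finite) env \<Rightarrow> 'n site \<Rightarrow> real) \<Rightarrow> 'n env \<Rightarrow> real" where
  "nabla_star v \<omega> = (\<Sum>e\<in>unit_dirs. \<omega> {0, e} * (v \<omega> e - v (shift e \<omega>) (- e)))"

end

theory Submission
  imports Defs
begin


lemma closed_ann:
  fixes M :: "'a::metric_space measure" and h :: "'a \<Rightarrow> real"
  assumes sM: "sets M = sets borel" and hi: "integrable M h"
  and H: "\<And>\<psi>. continuous_on UNIV \<psi> \<Longrightarrow> (\<And>x. \<bar>\<psi> x\<bar> \<le> 1) \<Longrightarrow> (\<integral>x. \<psi> x * h x \<partial>M) = 0"
  and F: "closed F"
  shows "(\<integral>x. indicator F x * h x \<partial>M) = 0"
proof (cases "F = {}")
  case True then show ?thesis by simp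
next
  case False
  define s where "s n x = max 0 (1 - real n * infdist x F) * h x" for n x
  have hm[measurable]: "h \<in> borel_measurable M" using hi by auto
  have Fm[measurable]: "F \<in> sets M" using F sM by auto
  have cont: "continuous_on UNIV (\<lambda>x. max 0 (1 - real n * infdist x F))" for n
    by (intro continuous_intros)
  have bnd1: "\<bar>max 0 (1 - real n * infdist x F)\<bar> \<le> 1" for n x
  proof -
    have "0 \<le> real n * infdist x F" using infdist_nonneg[of x F] by simp
    then show ?thesis by linarith
  qed
  have sm: "s n \<in> borel_measurable M" for n
  proof -
    have "(\<lambda>x. max 0 (1 - real n * infdist x F)) \<in> borel_measurable borel"
      by (rule borel_measurable_continuous_onI[OF cont])
    then have "(\<lambda>x. max 0 (1 - real n * infdist x F)) \<in> borel_measurable M"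
      by (subst measurable_cong_sets[OF sM refl])
    then show ?thesis unfolding s_def using hm by (rule borel_measurable_times)
  qed
  have lim: "AE x in M. (\<lambda>n. s n x) \<longlonglongrightarrow> indicator F x * h x"
  proof (rule AE_I2)
    fix x
    show "(\<lambda>n. s n x) \<longlonglongrightarrow> indicator F x * h x"
    proof (cases "x \<in> F")
      case True
      then have "infdist x F = 0" using in_closed_iff_infdist_zero[OF F False] by simp
      then show ?thesis using True by (simp add: s_def)
    next
      case nF: False
      then have d: "infdist x F > 0" using infdist_pos_not_in_closed[OF F False] by simp
      obtain N :: nat where N: "real N > 1 / infdist x F" using reals_Archimedean2 by blast
      have "eventually (\<lambda>n. s n x = indicator F x * h x) sequentially"
        unfolding eventually_sequentially
      proof (intro exI allI impI)
        fix n assume "N \<le> n"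
        then have "real n > 1 / infdist x F" using N by linarith
        then have "real n * infdist x F > 1" using d by (simp add: field_simps)
        then show "s n x = indicator F x * h x" using nF by (simp add: s_def)
      qed
      then show ?thesis by (rule tendsto_eventually)
    qed
  qed
  have bound: "AE x in M. norm (s n x) \<le> \<bar>h x\<bar>" for n
  proof (rule AE_I2)
    fix x show "norm (s n x) \<le> \<bar>h x\<bar>"
      using bnd1[of n x] unfolding s_def by (simp add: abs_mult mult_left_le_one_le)
  qed
  have "(\<lambda>n. integral\<^sup>L M (s n)) \<longlonglongrightarrow> (\<integral>x. indicator F x * h x \<partial>M)"
    by (rule integral_dominated_convergence[OF _ sm _ lim bound]) (auto intro: hi)
  moreover have "integral\<^sup>L M (s n) = 0" for n
    unfolding s_def by (rule H[OF cont bnd1])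
  ultimately show ?thesis by (simp add: LIMSEQ_const_iff)
qed



lemma integrable_mult_ind_right:
  fixes g :: "'a \<Rightarrow> real"
  assumes "A \<in> sets M" "integrable M g"
  shows "integrable M (\<lambda>x. g x * indicator A x)"
  using integrable_mult_indicator[OF assms] by (simp add: mult.commute)

lemma ann_zero:
  fixes M :: "'a::metric_space measure" and h :: "'a \<Rightarrow> real"
  assumes sM: "sets M = sets borel" and fin: "finite_measure M" and hi: "integrable M h"
  and H: "\<And>\<psi>. continuous_on UNIV \<psi> \<Longrightarrow> (\<And>x. \<bar>\<psi> x\<bar> \<le> 1) \<Longrightarrow> (\<integral>x. \<psi> x * h x \<partial>M) = 0"
  shows "AE x in M. h x = 0"
proof -
  interpret finite_measure M by (rule fin)
  define hp where "hp x = (\<bar>h x\<bar> + h x) / 2" for x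
  define hn where "hn x = (\<bar>h x\<bar> - h x) / 2" for x
  have hpi: "integrable M hp" unfolding hp_def using hi by auto
  have hni: "integrable M hn" unfolding hn_def using hi by auto
  have hpm[measurable]: "hp \<in> borel_measurable M" using hpi by auto
  have hnm[measurable]: "hn \<in> borel_measurable M" using hni by auto
  have hp0: "0 \<le> hp x" for x unfolding hp_def by auto
  have hn0: "0 \<le> hn x" for x unfolding hn_def by auto
  have hdiff: "h x = hp x - hn x" for x unfolding hp_def hn_def by (simp add: field_simps)
  have sets_eq: "sets M = sigma_sets UNIV (Collect closed)"
    unfolding sM borel_eq_closed by (rule sets_measure_of) auto
  define N1 where "N1 = density M (\<lambda>x. ennreal (hp x))"
  define N2 where "N2 = density M (\<lambda>x. ennreal (hn x))"
  have em: "emeasure (density M (\<lambda>x. ennreal (g x))) A = ennreal (\<integral>x. g x * indicator A x \<partial>M)"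
    if gi: "integrable M g" and g0: "\<And>x. 0 \<le> g x" and A: "A \<in> sets M" for g A
  proof -
    have [measurable]: "g \<in> borel_measurable M" using gi by auto
    have "emeasure (density M (\<lambda>x. ennreal (g x))) A = (\<integral>\<^sup>+x. ennreal (g x) * indicator A x \<partial>M)"
      by (rule emeasure_density) (auto simp: A)
    also have "\<dots> = (\<integral>\<^sup>+x. ennreal (g x * indicator A x) \<partial>M)"
      by (intro nn_integral_cong) (auto simp: indicator_def)
    also have "\<dots> = ennreal (\<integral>x. g x * indicator A x \<partial>M)"
      by (rule nn_integral_eq_integral[OF integrable_mult_ind_right[OF A gi]]) (rule AE_I2, simp add: g0)
    finally show ?thesis .
  qed
  have NN: "N1 = N2"
  proof (rule measure_eqI_generator_eq[where E="Collect closed" and \<Omega>=UNIV and A="\<lambda>_. UNIV"])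
    show "Int_stable (Collect closed)" by (auto simp: Int_stable_def)
    show "Collect closed \<subseteq> Pow UNIV" by auto
    show "sets N1 = sigma_sets UNIV (Collect closed)" unfolding N1_def using sets_eq by simp
    show "sets N2 = sigma_sets UNIV (Collect closed)" unfolding N2_def using sets_eq by simp
    show "range (\<lambda>_. UNIV) \<subseteq> Collect closed" by auto
    show "(\<Union>i::nat. UNIV) = UNIV" by auto
    fix X :: "'a set"
    show "emeasure N1 UNIV \<noteq> \<infinity>"
    proof -
      have "space M = UNIV" using sets_eq_imp_space_eq[OF sM] by simp
      then have "UNIV \<in> sets M" using sets.top[of M] by simp
      then show ?thesis using em[OF hpi hp0, of UNIV] by (simp add: N1_def)
    qed
    assume "X \<in> Collect closed"
    then have X: "closed X" by auto
    have Xm: "X \<in> sets M" using X sM by auto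
    have "(\<integral>x. indicator X x * h x \<partial>M) = 0" by (rule closed_ann[OF sM hi H X])
    moreover have "(\<integral>x. indicator X x * h x \<partial>M) = (\<integral>x. hp x * indicator X x \<partial>M) - (\<integral>x. hn x * indicator X x \<partial>M)"
    proof -
      have "(\<integral>x. indicator X x * h x \<partial>M) = (\<integral>x. hp x * indicator X x - hn x * indicator X x \<partial>M)"
        by (rule Bochner_Integration.integral_cong[OF refl]) (simp add: hdiff algebra_simps)
      also have "\<dots> = (\<integral>x. hp x * indicator X x \<partial>M) - (\<integral>x. hn x * indicator X x \<partial>M)"
        by (intro Bochner_Integration.integral_diff integrable_mult_ind_right[OF Xm] hpi hni)
      finally show ?thesis .
    qed
    ultimately have "(\<integral>x. hp x * indicator X x \<partial>M) = (\<integral>x. hn x * indicator X x \<partial>M)" by simp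
    then show "emeasure N1 X = emeasure N2 X"
      unfolding N1_def N2_def using em[OF hpi hp0 Xm] em[OF hni hn0 Xm] by simp
  qed
  have "AE x in M. hp x = hn x"
  proof (rule density_unique_real[OF hpi hni])
    fix A assume A: "A \<in> sets M"
    have e1: "emeasure N1 A = emeasure N2 A" using NN by simp
    have "ennreal (\<integral>x. hp x * indicator A x \<partial>M) = ennreal (\<integral>x. hn x * indicator A x \<partial>M)"
      using e1 unfolding N1_def N2_def em[OF hpi hp0 A] em[OF hni hn0 A] .
    moreover have "0 \<le> (\<integral>x. hp x * indicator A x \<partial>M)"
      by (rule Bochner_Integration.integral_nonneg) (simp add: hp0)
    moreover have "0 \<le> (\<integral>x. hn x * indicator A x \<partial>M)"
      by (rule Bochner_Integration.integral_nonneg) (simp add: hn0)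
    ultimately have "(\<integral>x. hp x * indicator A x \<partial>M) = (\<integral>x. hn x * indicator A x \<partial>M)"
      using ennreal_inj by blast
    moreover have "(\<integral>x \<in> A. hp x \<partial>M) = (\<integral>x. hp x * indicator A x \<partial>M)"
      unfolding set_lebesgue_integral_def by (rule Bochner_Integration.integral_cong) (auto simp: indicator_def)
    moreover have "(\<integral>x \<in> A. hn x \<partial>M) = (\<integral>x. hn x * indicator A x \<partial>M)"
      unfolding set_lebesgue_integral_def by (rule Bochner_Integration.integral_cong) (auto simp: indicator_def)
    ultimately show "(\<integral>x \<in> A. hp x \<partial>M) = (\<integral>x \<in> A. hn x \<partial>M)" by simp
  qed
  then show ?thesis by (rule AE_mp) (auto intro!: AE_I2 simp: hdiff)
qed



lemma eval_cont: "continuous_on UNIV (\<lambda>\<omega>::('n::finite) env. \<omega> b)"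
  by (rule continuous_on_product_coordinates)

lemma eval_meas[measurable]: "(\<lambda>\<omega>::('n::finite) env. \<omega> b) \<in> borel_measurable borel"
  by (rule borel_measurable_continuous_onI[OF eval_cont])

lemma pos_set_meas: "{\<omega>::('n::finite) env. 0 < \<omega> b} \<in> sets borel"
  by measurable

lemma adj_meas: "{\<omega>::('n::finite) env. (x, y) \<in> open_adj \<omega>} \<in> sets borel"
proof (cases "{x, y} \<in> bonds")
  case True
  then have "{\<omega>::'n env. (x, y) \<in> open_adj \<omega>} = {\<omega>. 0 < \<omega> {x, y}}"
    by (auto simp: open_adj_def)
  then show ?thesis using pos_set_meas by simp
next
  case False
  then have "{\<omega>::'n env. (x, y) \<in> open_adj \<omega>} = {}"
    by (auto simp: open_adj_def)
  then show ?thesis by simp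
qed

lemma relpow_meas: "{\<omega>::('n::finite) env. (x, y) \<in> open_adj \<omega> ^^ n} \<in> sets borel"
proof (induction n arbitrary: y)
  case 0
  show ?case by (cases "x = y") auto
next
  case (Suc n)
  have "{\<omega>::'n env. (x, y) \<in> open_adj \<omega> ^^ Suc n} =
      (\<Union>z. {\<omega>. (x, z) \<in> open_adj \<omega> ^^ n} \<inter> {\<omega>. (z, y) \<in> open_adj \<omega>})"
    by (auto elim: relpow_Suc_E intro: relpow_Suc_I)
  also have "\<dots> \<in> sets borel"
    using Suc adj_meas by (intro sets.countable_UN) auto
  finally show ?case .
qed

lemma reach_meas: "{\<omega>::('n::finite) env. (x, y) \<in> (open_adj \<omega>)\<^sup>*} \<in> sets borel"
proof -
  have "{\<omega>::'n env. (x, y) \<in> (open_adj \<omega>)\<^sup>*} = (\<Union>n. {\<omega>. (x, y) \<in> open_adj \<omega> ^^ n})"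
    by (auto simp: rtrancl_power)
  also have "\<dots> \<in> sets borel"
    using relpow_meas by (intro sets.countable_UN) auto
  finally show ?thesis .
qed

lemma infinite_countable_iff:
  fixes S :: "'a::countable set"
  shows "infinite S \<longleftrightarrow> (\<forall>n. \<exists>y\<in>S. n \<le> to_nat y)"
proof
  assume inf: "infinite S"
  show "\<forall>n. \<exists>y\<in>S. n \<le> to_nat y"
  proof (rule ccontr)
    assume "\<not> (\<forall>n. \<exists>y\<in>S. n \<le> to_nat y)"
    then obtain n where n: "\<forall>y\<in>S. to_nat y < n" by (auto simp: not_le)
    then have sub: "S \<subseteq> to_nat -` {..<n}" by auto
    have fin: "finite (to_nat -` {..<n} :: 'a set)"
      by (rule finite_vimageI) (auto simp: inj_to_nat)
    from finite_subset[OF sub fin] inf show False by simp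
  qed
next
  assume H: "\<forall>n. \<exists>y\<in>S. n \<le> to_nat y"
  show "infinite S"
  proof
    assume "finite S"
    then have "finite (to_nat ` S)" by simp
    then obtain m where m: "\<forall>k\<in>to_nat ` S. k \<le> m"
      using finite_nat_set_iff_bounded_le by meson
    obtain y where y: "y \<in> S" "Suc m \<le> to_nat y" using H by meson
    have "to_nat y \<le> m" using m y(1) by simp
    with y(2) show False by simp
  qed
qed

lemma infcl_meas: "{\<omega>::('n::finite) env. x \<in> inf_cluster \<omega>} \<in> sets borel"
proof -
  have "{\<omega>::'n env. x \<in> inf_cluster \<omega>} =
     (\<Inter>n. \<Union>y. if n \<le> to_nat y then {\<omega>. (x, y) \<in> (open_adj \<omega>)\<^sup>*} else {})"
    unfolding inf_cluster_def cluster_of_def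
    by (subst infinite_countable_iff) (auto split: if_splits)
  also have "\<dots> \<in> sets borel"
    using reach_meas by (intro sets.countable_INT sets.countable_UN) auto
  finally show ?thesis .
qed

lemma shift_shift: "shift a (shift b \<omega>) = shift (a + b) \<omega>"
  unfolding shift_def by (rule ext) (simp add: image_image add.assoc)

lemma shift_0[simp]: "shift 0 \<omega> = \<omega>"
  unfolding shift_def by simp

lemma shift_doubleton: "shift x \<omega> {a, b} = \<omega> {a + x, b + x}"
  unfolding shift_def by simp

lemma unit_dirs_finite: "finite (unit_dirs :: ('n::finite) site set)"
proof -
  have eq: "unit_dirs = (\<lambda>(i, s). axis i s) ` (UNIV \<times> {1, -1 :: int})"
    unfolding unit_dirs_def by auto
  show ?thesis unfolding eq by (rule finite_imageI) simp
qed

lemma unit_dirs_neg: "e \<in> unit_dirs \<Longrightarrow> - e \<in> unit_dirs"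
  unfolding unit_dirs_def by (auto simp: axis_def vec_eq_iff)

lemma unit_dirs_nz: "e \<in> unit_dirs \<Longrightarrow> e \<noteq> 0"
  unfolding unit_dirs_def by (auto simp: axis_def vec_eq_iff)

lemma unit_dirs_ne_neg: "e \<in> unit_dirs \<Longrightarrow> e \<noteq> - e"
proof
  assume e: "e \<in> unit_dirs" "e = - e"
  then have "e $ i = 0" for i by (metis neg_equal_zero vector_uminus_component)
  then have "e = 0" by (simp add: vec_eq_iff)
  then show False using unit_dirs_nz[OF e(1)] by simp
qed

lemma bond_translate: "b \<in> bonds \<Longrightarrow> (\<lambda>y. y + x) ` b \<in> bonds"
proof -
  assume "b \<in> bonds"
  then obtain p e where b: "b = {p, p + e}" "e \<in> unit_dirs" unfolding bonds_def by auto
  then have "(\<lambda>y. y + x) ` b = {p + x, (p + x) + e}" by (auto simp: algebra_simps)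
  then show ?thesis using b unfolding bonds_def by auto
qed

lemma bond_translate_iff: "{a + x, b + x} \<in> bonds \<longleftrightarrow> {a, b} \<in> bonds"
proof
  assume "{a, b} \<in> bonds"
  from bond_translate[OF this, of x] show "{a + x, b + x} \<in> bonds" by simp
next
  assume "{a + x, b + x} \<in> bonds"
  from bond_translate[OF this, of "-x"] show "{a, b} \<in> bonds" by simp
qed

lemma open_adj_shift: "(a, b) \<in> open_adj (shift x \<omega>) \<longleftrightarrow> (a + x, b + x) \<in> open_adj \<omega>"
  unfolding open_adj_def by (simp add: shift_doubleton bond_translate_iff)

lemma rtrancl_shift_aux:
  "(a, b) \<in> (open_adj (shift x \<omega>))\<^sup>* \<Longrightarrow> (a + x, b + x) \<in> (open_adj \<omega>)\<^sup>*"
proof (induction rule: rtrancl_induct)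
  case base then show ?case by simp
next
  case (step y z)
  then show ?case using open_adj_shift by (metis rtrancl.rtrancl_into_rtrancl)
qed

lemma rtrancl_shift:
  "(a, b) \<in> (open_adj (shift x \<omega>))\<^sup>* \<longleftrightarrow> (a + x, b + x) \<in> (open_adj \<omega>)\<^sup>*"
proof
  assume "(a + x, b + x) \<in> (open_adj \<omega>)\<^sup>*"
  then have "(a + x, b + x) \<in> (open_adj (shift (-x) (shift x \<omega>)))\<^sup>*"
    by (simp add: shift_shift)
  from rtrancl_shift_aux[OF this] show "(a, b) \<in> (open_adj (shift x \<omega>))\<^sup>*" by simp
qed (rule rtrancl_shift_aux)

lemma cluster_shift: "cluster_of (shift x \<omega>) a = (\<lambda>y. y - x) ` cluster_of \<omega> (a + x)"
  unfolding cluster_of_def rtrancl_shift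
  by (auto simp: image_iff) (metis add_diff_cancel)

lemma inf_cluster_shift: "a \<in> inf_cluster (shift x \<omega>) \<longleftrightarrow> a + x \<in> inf_cluster \<omega>"
proof -
  have "inj (\<lambda>y::('a::finite) site. y - x)" by (auto intro: injI)
  then show ?thesis
    unfolding inf_cluster_def by (simp add: cluster_shift finite_image_iff inj_on_subset[of _ UNIV])
qed

lemma adj_dir:
  assumes "(a, b) \<in> open_adj \<omega>"
  shows "\<exists>e\<in>unit_dirs. b = a + e \<and> \<omega> {a, a + e} > 0"
proof -
  from assms have ab: "{a, b} \<in> bonds" "\<omega> {a, b} > 0" by (auto simp: open_adj_def)
  then obtain p e where pe: "{a, b} = {p, p + e}" "e \<in> unit_dirs" unfolding bonds_def by auto
  from pe(1) have "(a = p \<and> b = p + e) \<or> (a = p + e \<and> b = p)" by (simp add: doubleton_eq_iff)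
  then show ?thesis
  proof
    assume "a = p \<and> b = p + e" then show ?thesis using pe ab by auto
  next
    assume h: "a = p + e \<and> b = p"
    then have "b = a + (- e)" by simp
    moreover have "{a, a + (- e)} = {a, b}" using h by auto
    ultimately show ?thesis using unit_dirs_neg[OF pe(2)] ab by metis
  qed
qed



lemma countable_bonds: "countable (bonds :: ('n::finite) site set set)"
proof -
  have eq: "bonds = (\<lambda>p. {fst p, fst p + snd p}) ` (UNIV \<times> (unit_dirs :: 'n site set))"
    unfolding bonds_def by (fastforce simp: image_iff)
  show ?thesis unfolding eq by (rule countable_image[OF countableI_type])
qed

definition phi :: "('n::finite) env \<Rightarrow> nat \<Rightarrow> real" where
  "phi \<omega> = (\<lambda>n. \<omega> (from_nat_into bonds n))"

definition pinv :: "(nat \<Rightarrow> real) \<Rightarrow> ('n::finite) env" where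
  "pinv z = (\<lambda>b. if b \<in> bonds then z (to_nat_on bonds b) else 0)"

lemma phi_cont: "continuous_on UNIV (phi :: ('n::finite) env \<Rightarrow> nat \<Rightarrow> real)"
  unfolding phi_def by (intro continuous_on_coordinatewise_then_product continuous_on_product_coordinates)

lemma pinv_cont: "continuous_on UNIV (pinv :: (nat \<Rightarrow> real) \<Rightarrow> ('n::finite) env)"
  unfolding pinv_def
proof (intro continuous_on_coordinatewise_then_product)
  fix b :: "'n site set"
  show "continuous_on UNIV (\<lambda>z::nat \<Rightarrow> real. if b \<in> bonds then z (to_nat_on bonds b) else 0)"
    by (cases "b \<in> bonds") (simp_all add: continuous_on_const)
qed

lemma phi_meas[measurable]: "(phi :: ('n::finite) env \<Rightarrow> nat \<Rightarrow> real) \<in> borel_measurable borel"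
  by (rule borel_measurable_continuous_onI[OF phi_cont])

lemma pinv_meas[measurable]: "(pinv :: (nat \<Rightarrow> real) \<Rightarrow> ('n::finite) env) \<in> borel_measurable borel"
  by (rule borel_measurable_continuous_onI[OF pinv_cont])

lemma pinv_phi: "\<omega> \<in> Omega c0 \<Longrightarrow> pinv (phi \<omega>) = \<omega>"
  unfolding pinv_def phi_def Omega_def
  by (rule ext) (auto simp: countable_bonds)

lemma closed_Omega: "closed (Omega c0 :: ('n::finite) env set)"
proof -
  have "Omega c0 = (\<Inter>b. (\<lambda>\<omega>::'n env. \<omega> b) -` (if b \<in> bonds then {0..c0} else {0}))"
    unfolding Omega_def by (auto split: if_splits)
  also have "closed \<dots>"
  proof (intro closed_INT ballI)
    fix b :: "'n site set"
    have "closed (UNIV \<inter> (\<lambda>\<omega>::'n env. \<omega> b) -` (if b \<in> bonds then {0..c0} else {0}))"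
      by (rule continuous_closed_preimage[OF eval_cont]) auto
    then show "closed ((\<lambda>\<omega>::'n env. \<omega> b) -` (if b \<in> bonds then {0..c0} else {0}))"
      by simp
  qed
  finally show ?thesis .
qed

lemma Omega_bond:
  fixes \<omega> :: "('n::finite) env" and e :: "'n site"
  assumes "\<omega> \<in> Omega c0" "e \<in> unit_dirs"
  shows "\<bar>\<omega> {0, e}\<bar> \<le> c0"
proof -
  have "{0, 0 + e} \<in> bonds" unfolding bonds_def using assms(2) by blast
  then have "{0, e} \<in> bonds" by simp
  then show ?thesis using assms(1) unfolding Omega_def by auto
qed

lemma nabla_formula:
  assumes e: "e \<in> unit_dirs"
  shows "nabla_star (\<lambda>\<omega>' e'. \<psi> \<omega>' * (if e = e' then 1 else 0)) \<omega>
     = \<omega> {0, e} * \<psi> \<omega> - \<omega> {0, - e} * \<psi> (shift (- e) \<omega>)"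
proof -
  have "nabla_star (\<lambda>\<omega>' e'. \<psi> \<omega>' * (if e = e' then 1 else 0)) \<omega>
     = (\<Sum>e'\<in>unit_dirs. (if e = e' then \<omega> {0, e'} * \<psi> \<omega> else 0))
       - (\<Sum>e'\<in>unit_dirs. (if e' = - e then \<omega> {0, e'} * \<psi> (shift e' \<omega>) else 0))"
    unfolding nabla_star_def sum_subtractf[symmetric]
    by (intro sum.cong refl) (auto simp: algebra_simps)
  also have "\<dots> = \<omega> {0, e} * \<psi> \<omega> - \<omega> {0, - e} * \<psi> (shift (- e) \<omega>)"
    using e unit_dirs_neg[OF e]
    by (simp only: sum.delta[OF unit_dirs_finite] sum.delta'[OF unit_dirs_finite] if_True)
  finally show ?thesis .
qed



locale setting =
  fixes Q :: "('n::finite) env measure" and c0 :: real and u :: "'n env \<Rightarrow> real"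
  assumes c0pos: "c0 > 0"
    and Qp: "prob_space Q"
    and sQ: "sets Q = sets borel"
    and OmQ: "emeasure Q (Omega c0) = 1"
    and inv: "shift_invariant Q"
    and erg: "shift_ergodic Q"
    and uniq: "AE \<omega> in Q. unique_infinite_cluster \<omega>"
    and um: "u \<in> borel_measurable (mu Q)"
    and u2: "integrable (mu Q) (\<lambda>\<omega>. (u \<omega>)\<^sup>2)"
    and hyp: "\<And>\<psi> e. continuous_on (Omega c0) \<psi> \<Longrightarrow> e \<in> unit_dirs \<Longrightarrow>
           integral\<^sup>L (mu Q) (\<lambda>\<omega>. u \<omega> * nabla_star (\<lambda>\<omega>' e'. \<psi> \<omega>' * (if e = e' then 1 else 0)) \<omega>) = 0"
begin

lemma spQ: "space Q = UNIV"
  using sets_eq_imp_space_eq[OF sQ] by simp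

lemma measQ1: "measurable Q N = measurable borel N"
  by (rule measurable_cong_sets[OF sQ refl])

lemma measQ2: "measurable N Q = measurable N borel"
  by (rule measurable_cong_sets[OF refl sQ])

lemma bmQ: assumes "f \<in> borel_measurable borel" shows "f \<in> borel_measurable Q"
  by (subst measQ1) (rule assms)

lemma setsQ: "A \<in> sets borel \<Longrightarrow> A \<in> sets Q"
  using sQ by simp

lemma eval_measQ[measurable]: "(\<lambda>\<omega>::'n env. \<omega> b) \<in> borel_measurable Q"
  by (rule bmQ[OF eval_meas])

lemma infcl_measQ[measurable]: "{\<omega>::'n env. x \<in> inf_cluster \<omega>} \<in> sets Q"
  by (rule setsQ[OF infcl_meas])

lemma shift_measQ[measurable]: "shift x \<in> measurable Q Q"
  using inv unfolding shift_invariant_def by blast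

lemma shift_distr: "distr Q Q (shift x) = Q"
  using inv unfolding shift_invariant_def by blast

definition Ir :: "'n env \<Rightarrow> real" where
  "Ir \<omega> = indicator {\<omega>. 0 \<in> inf_cluster \<omega>} \<omega>"

definition w :: "'n env \<Rightarrow> real" where
  "w \<omega> = Ir \<omega> * u \<omega>"

lemma mu_eq: "mu Q = density Q (\<lambda>\<omega>. ennreal (Ir \<omega>))"
  unfolding mu_def Ir_def by (simp add: ennreal_indicator)

lemma sets_mu: "sets (mu Q) = sets Q"
  unfolding mu_eq by simp

lemma space_mu: "space (mu Q) = UNIV"
  using sets_eq_imp_space_eq[OF sets_mu] spQ by simp

lemma u_meas[measurable]: "u \<in> borel_measurable Q"
  by (subst measurable_cong_sets[OF sets_mu[symmetric] refl]) (rule um)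

lemma Ir_meas[measurable]: "Ir \<in> borel_measurable Q"
  unfolding Ir_def by measurable

lemma Ir01: "Ir \<omega> = 0 \<or> Ir \<omega> = 1"
  unfolding Ir_def by (simp add: indicator_def)

lemma Ir_nonneg: "0 \<le> Ir \<omega>"
  unfolding Ir_def by simp

lemma w_meas[measurable]: "w \<in> borel_measurable Q"
  unfolding w_def by measurable

lemma finQ: "finite_measure Q"
  using Qp by (simp add: prob_space_def)

lemma w2_int: "integrable Q (\<lambda>\<omega>. (w \<omega>)\<^sup>2)"
proof -
  have "integrable Q (\<lambda>\<omega>. Ir \<omega> *\<^sub>R (u \<omega>)\<^sup>2)"
    using u2 unfolding mu_eq
    by (subst (asm) integrable_density) (auto simp: Ir_nonneg)
  moreover have "Ir \<omega> *\<^sub>R (u \<omega>)\<^sup>2 = (w \<omega>)\<^sup>2" for \<omega>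
    using Ir01[of \<omega>] unfolding w_def by (auto simp: power2_eq_square)
  ultimately show ?thesis by simp
qed

lemma w_int: "integrable Q w"
  using finite_measure.square_integrable_imp_integrable[OF finQ w_meas w2_int] .

lemma AE_Om: "AE \<omega> in Q. \<omega> \<in> Omega c0"
proof -
  have "prob_space.prob Q (Omega c0) = 1"
    using OmQ by (simp add: measure_def)
  then show ?thesis by (rule prob_space.AE_prob_1[OF Qp])
qed

lemma inv_integral:
  fixes F :: "'n env \<Rightarrow> real"
  assumes [measurable]: "F \<in> borel_measurable Q"
  shows "(\<integral>\<omega>. F (shift x \<omega>) \<partial>Q) = integral\<^sup>L Q F"
proof -
  have "integral\<^sup>L (distr Q Q (shift x)) F = (\<integral>\<omega>. F (shift x \<omega>) \<partial>Q)"
    by (rule integral_distr) measurable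
  then show ?thesis using shift_distr by simp
qed

lemma inv_integrable:
  fixes F :: "'n env \<Rightarrow> real"
  assumes [measurable]: "F \<in> borel_measurable Q" and "integrable Q F"
  shows "integrable Q (\<lambda>\<omega>. F (shift x \<omega>))"
proof -
  have "integrable (distr Q Q (shift x)) F \<longleftrightarrow> integrable Q (\<lambda>\<omega>. F (shift x \<omega>))"
    by (rule integrable_distr_eq) measurable
  then show ?thesis using shift_distr assms(2) by simp
qed

lemma inv_AE:
  assumes P: "{\<omega>. P \<omega>} \<in> sets Q" and ae: "AE \<omega> in Q. P \<omega>"
  shows "AE \<omega> in Q. P (shift x \<omega>)"
proof -
  have P': "{\<omega> \<in> space Q. P \<omega>} \<in> sets Q" using P spQ by simp
  have "AE \<omega> in distr Q Q (shift x). P \<omega>" by (subst shift_distr) (rule ae)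
  then show ?thesis by (subst (asm) AE_distr_iff[OF shift_measQ P'])
qed

lemma bnd_int:
  assumes f: "integrable Q f" and e: "e \<in> unit_dirs" and k[measurable]: "k \<in> borel_measurable Q"
    and kb: "\<And>\<omega>. \<bar>k \<omega>\<bar> \<le> 1"
  shows "integrable Q (\<lambda>\<omega>. \<omega> {0, e} * k \<omega> * f \<omega>)"
proof (rule Bochner_Integration.integrable_bound[of Q "\<lambda>\<omega>. c0 * f \<omega>"])
  show "integrable Q (\<lambda>\<omega>. c0 * f \<omega>)" using f by simp
  have [measurable]: "f \<in> borel_measurable Q" using f by simp
  show "(\<lambda>\<omega>. \<omega> {0, e} * k \<omega> * f \<omega>) \<in> borel_measurable Q" by measurable
  show "AE \<omega> in Q. norm (\<omega> {0, e} * k \<omega> * f \<omega>) \<le> norm (c0 * f \<omega>)"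
    using AE_Om
  proof (rule AE_mp, intro AE_I2 impI)
    fix \<omega> :: "'n env" assume "\<omega> \<in> Omega c0"
    then have b: "\<bar>\<omega> {0, e}\<bar> \<le> c0" by (rule Omega_bond[OF _ e])
    have "\<bar>\<omega> {0, e} * k \<omega>\<bar> \<le> c0 * 1"
      unfolding abs_mult by (rule mult_mono[OF b kb[of \<omega>]]) (use c0pos in auto)
    then have "\<bar>\<omega> {0, e} * k \<omega>\<bar> * \<bar>f \<omega>\<bar> \<le> c0 * \<bar>f \<omega>\<bar>"
      by (intro mult_right_mono) auto
    then show "norm (\<omega> {0, e} * k \<omega> * f \<omega>) \<le> norm (c0 * f \<omega>)"
      using c0pos by (simp add: abs_mult)
  qed
qed

end


context setting begin

lemma key_int:
  fixes \<psi> :: "'n env \<Rightarrow> real"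
  assumes e: "e \<in> unit_dirs" and pc: "continuous_on UNIV \<psi>" and pb: "\<And>\<omega>. \<bar>\<psi> \<omega>\<bar> \<le> 1"
  shows "(\<integral>\<omega>. \<psi> \<omega> * (\<omega> {0, e} * (w \<omega> - w (shift e \<omega>))) \<partial>Q) = 0"
proof -
  have pm[measurable]: "\<psi> \<in> borel_measurable Q"
    by (rule bmQ[OF borel_measurable_continuous_onI[OF pc]])
  have ne: "- e \<in> unit_dirs" using unit_dirs_neg[OF e] .
  define A where "A \<omega> = \<omega> {0, e} * \<psi> \<omega> * w \<omega>" for \<omega>
  define B where "B \<omega> = \<omega> {0, - e} * \<psi> (shift (- e) \<omega>) * w \<omega>" for \<omega>
  define B' where "B' \<omega> = \<omega> {0, e} * \<psi> \<omega> * w (shift e \<omega>)" for \<omega>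
  have Ai: "integrable Q A" unfolding A_def by (rule bnd_int[OF w_int e pm pb])
  have psm: "(\<lambda>\<omega>. \<psi> (shift (- e) \<omega>)) \<in> borel_measurable Q" by measurable
  have Bi: "integrable Q B" unfolding B_def by (rule bnd_int[OF w_int ne psm pb])
  have wsi: "integrable Q (\<lambda>\<omega>. w (shift e \<omega>))" by (rule inv_integrable[OF w_meas w_int])
  have B'i: "integrable Q B'" unfolding B'_def by (rule bnd_int[OF wsi e pm pb])
  have Bm: "B \<in> borel_measurable Q" using Bi by simp
  have Bsh: "B (shift e \<omega>) = B' \<omega>" for \<omega>
  proof -
    have "shift e \<omega> {0, - e} = \<omega> {0, e}"
      by (simp add: shift_doubleton insert_commute)
    moreover have "shift (- e) (shift e \<omega>) = \<omega>" by (simp add: shift_shift)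
    ultimately show ?thesis unfolding B_def B'_def by simp
  qed
  have BB': "integral\<^sup>L Q B' = integral\<^sup>L Q B"
    using inv_integral[OF Bm, of e] Bsh by simp
  have "continuous_on (Omega c0) \<psi>" using continuous_on_subset[OF pc] by simp
  from hyp[OF this e]
  have "(\<integral>\<omega>. u \<omega> * (\<omega> {0, e} * \<psi> \<omega> - \<omega> {0, - e} * \<psi> (shift (- e) \<omega>)) \<partial>mu Q) = 0"
    by (simp only: nabla_formula[OF e])
  moreover have "(\<integral>\<omega>. u \<omega> * (\<omega> {0, e} * \<psi> \<omega> - \<omega> {0, - e} * \<psi> (shift (- e) \<omega>)) \<partial>mu Q)
     = (\<integral>\<omega>. Ir \<omega> *\<^sub>R (u \<omega> * (\<omega> {0, e} * \<psi> \<omega> - \<omega> {0, - e} * \<psi> (shift (- e) \<omega>))) \<partial>Q)"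
    unfolding mu_eq by (rule integral_density) (measurable, auto simp: Ir_nonneg)
  moreover have "\<dots> = (\<integral>\<omega>. A \<omega> - B \<omega> \<partial>Q)"
    by (rule Bochner_Integration.integral_cong[OF refl]) (simp add: A_def B_def w_def algebra_simps)
  moreover have "\<dots> = integral\<^sup>L Q A - integral\<^sup>L Q B"
    by (rule Bochner_Integration.integral_diff[OF Ai Bi])
  ultimately have AB: "integral\<^sup>L Q A - integral\<^sup>L Q B = 0" by simp
  have "(\<integral>\<omega>. \<psi> \<omega> * (\<omega> {0, e} * (w \<omega> - w (shift e \<omega>))) \<partial>Q) = (\<integral>\<omega>. A \<omega> - B' \<omega> \<partial>Q)"
    by (rule Bochner_Integration.integral_cong[OF refl]) (simp add: A_def B'_def algebra_simps)
  also have "\<dots> = integral\<^sup>L Q A - integral\<^sup>L Q B'"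
    by (rule Bochner_Integration.integral_diff[OF Ai B'i])
  finally show ?thesis using AB BB' by simp
qed

end


context setting begin

lemma g_int:
  assumes e: "e \<in> unit_dirs"
  shows "integrable Q (\<lambda>\<omega>. \<omega> {0, e} * (w \<omega> - w (shift e \<omega>)))"
proof -
  have c1: "(\<lambda>\<omega>::'n env. 1::real) \<in> borel_measurable Q" by simp
  have wsi: "integrable Q (\<lambda>\<omega>. w (shift e \<omega>))" by (rule inv_integrable[OF w_meas w_int])
  have i1: "integrable Q (\<lambda>\<omega>. \<omega> {0, e} * 1 * w \<omega>)" by (rule bnd_int[OF w_int e c1]) simp
  have i2: "integrable Q (\<lambda>\<omega>. \<omega> {0, e} * 1 * w (shift e \<omega>))" by (rule bnd_int[OF wsi e c1]) simp
  have "integrable Q (\<lambda>\<omega>. \<omega> {0, e} * 1 * w \<omega> - \<omega> {0, e} * 1 * w (shift e \<omega>))"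
    by (rule Bochner_Integration.integrable_diff[OF i1 i2])
  then show ?thesis by (simp add: algebra_simps)
qed

lemma edge_AE:
  assumes e: "e \<in> unit_dirs"
  shows "AE \<omega> in Q. \<omega> {0, e} * (w \<omega> - w (shift e \<omega>)) = 0"
proof -
  define g where "g \<omega> = \<omega> {0, e} * (w \<omega> - w (shift e \<omega>))" for \<omega>
  have gm[measurable]: "g \<in> borel_measurable Q" unfolding g_def by measurable
  have gi: "integrable Q g" unfolding g_def by (rule g_int[OF e])
  define M' where "M' = distr Q borel (phi :: 'n env \<Rightarrow> nat \<Rightarrow> real)"
  have phim: "(phi :: 'n env \<Rightarrow> nat \<Rightarrow> real) \<in> measurable Q borel" by (subst measQ1) (rule phi_meas)
  have gb: "g \<in> borel_measurable borel" using gm by (subst (asm) measQ1)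
  define h where "h z = g (pinv z)" for z
  have hm[measurable]: "h \<in> borel_measurable borel" unfolding h_def by (rule measurable_compose[OF pinv_meas gb])
  have hphi: "AE \<omega> in Q. g \<omega> = h (phi \<omega>)"
    using AE_Om by (rule AE_mp) (auto intro!: AE_I2 simp: h_def pinv_phi)
  have hpm: "(\<lambda>\<omega>. h (phi \<omega>)) \<in> borel_measurable Q" by (rule measurable_compose[OF phim hm])
  have "AE z in M'. h z = 0"
  proof (rule ann_zero)
    show "sets M' = sets borel" unfolding M'_def by simp
    show "finite_measure M'" unfolding M'_def
      using prob_space.prob_space_distr[OF Qp phim] by (simp add: prob_space_def)
    show "integrable M' h" unfolding M'_def
      by (subst integrable_distr_eq[OF phim hm]) (rule integrable_cong_AE_imp[OF gi hpm hphi])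
    fix \<psi>' :: "(nat \<Rightarrow> real) \<Rightarrow> real"
    assume c: "continuous_on UNIV \<psi>'" and b: "\<And>x. \<bar>\<psi>' x\<bar> \<le> 1"
    have pm: "\<psi>' \<in> borel_measurable borel" by (rule borel_measurable_continuous_onI[OF c])
    have pq: "(\<lambda>\<omega>. \<psi>' (phi \<omega>)) \<in> borel_measurable Q" by (rule measurable_compose[OF phim pm])
    have "(\<integral>z. \<psi>' z * h z \<partial>M') = (\<integral>\<omega>. \<psi>' (phi \<omega>) * h (phi \<omega>) \<partial>Q)"
      unfolding M'_def by (rule integral_distr[OF phim]) (use pm hm in measurable)
    also have "\<dots> = (\<integral>\<omega>. \<psi>' (phi \<omega>) * g \<omega> \<partial>Q)"
    proof -
      have ae2: "AE \<omega> in Q. \<psi>' (phi \<omega>) * h (phi \<omega>) = \<psi>' (phi \<omega>) * g \<omega>"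
        using hphi by (rule AE_mp) (auto intro!: AE_I2)
      show ?thesis
        by (rule integral_cong_AE[OF borel_measurable_times[OF pq hpm] borel_measurable_times[OF pq gm] ae2])
    qed
    also have "\<dots> = 0"
      unfolding g_def
    proof (rule key_int[OF e])
      show "continuous_on UNIV (\<lambda>\<omega>. \<psi>' (phi \<omega>))"
        by (rule continuous_on_compose2[OF c phi_cont]) simp
      show "\<bar>\<psi>' (phi \<omega>)\<bar> \<le> 1" for \<omega> by (rule b)
    qed
    finally show "(\<integral>z. \<psi>' z * h z \<partial>M') = 0" .
  qed
  then have "AE \<omega> in Q. h (phi \<omega>) = 0"
    unfolding M'_def by (subst (asm) AE_distr_iff[OF phim]) simp_all
  then have "AE \<omega> in Q. g \<omega> = 0" using hphi by eventually_elim simp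
  then show ?thesis unfolding g_def .
qed

end


context setting begin

definition good :: "'n env \<Rightarrow> bool" where
  "good \<omega> \<longleftrightarrow> (\<forall>x e. e \<in> unit_dirs \<longrightarrow> 0 < \<omega> {x, x + e} \<longrightarrow> w (shift x \<omega>) = w (shift (x + e) \<omega>))"

lemma edge_one:
  assumes e: "e \<in> unit_dirs"
  shows "AE \<omega> in Q. 0 < \<omega> {x, x + e} \<longrightarrow> w (shift x \<omega>) = w (shift (x + e) \<omega>)"
proof -
  have ae0: "AE \<omega> in Q. 0 < \<omega> {0, e} \<longrightarrow> w \<omega> = w (shift e \<omega>)"
    using edge_AE[OF e] by eventually_elim auto
  have wsm: "(\<lambda>\<omega>. w (shift e \<omega>)) \<in> borel_measurable Q" by (rule measurable_compose[OF shift_measQ w_meas])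
  have "{\<omega>. 0 < \<omega> {0, e} \<longrightarrow> w \<omega> = w (shift e \<omega>)} =
      {\<omega> \<in> space Q. \<omega> {0, e} \<le> 0} \<union> {\<omega> \<in> space Q. w \<omega> = w (shift e \<omega>)}"
    by (auto simp: spQ)
  also have "\<dots> \<in> sets Q"
    by (intro sets.Un borel_measurable_le borel_measurable_eq eval_measQ measurable_const w_meas wsm) simp_all
  finally have Pm: "{\<omega>. 0 < \<omega> {0, e} \<longrightarrow> w \<omega> = w (shift e \<omega>)} \<in> sets Q" .
  from inv_AE[OF Pm ae0, of x]
  have "AE \<omega> in Q. 0 < shift x \<omega> {0, e} \<longrightarrow> w (shift x \<omega>) = w (shift e (shift x \<omega>))" .
  then show ?thesis by eventually_elim (simp add: shift_doubleton shift_shift ac_simps)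
qed

lemma good_AE: "AE \<omega> in Q. good \<omega>"
proof -
  have "\<forall>x e. AE \<omega> in Q. e \<in> unit_dirs \<longrightarrow> 0 < \<omega> {x, x + e} \<longrightarrow> w (shift x \<omega>) = w (shift (x + e) \<omega>)"
  proof (intro allI)
    fix x e :: "'n site"
    show "AE \<omega> in Q. e \<in> unit_dirs \<longrightarrow> 0 < \<omega> {x, x + e} \<longrightarrow> w (shift x \<omega>) = w (shift (x + e) \<omega>)"
    proof (cases "e \<in> unit_dirs")
      case True then show ?thesis using edge_one[OF True, of x] by simp
    qed simp
  qed
  then show ?thesis unfolding good_def by (simp add: AE_all_countable)
qed

lemma path_const:
  assumes g: "good \<omega>" and p: "(a, b) \<in> (open_adj \<omega>)\<^sup>*"
  shows "w (shift a \<omega>) = w (shift b \<omega>)"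
  using p
proof (induction rule: rtrancl_induct)
  case base then show ?case by simp
next
  case (step y z)
  from adj_dir[OF step(2)] obtain e where e: "e \<in> unit_dirs" "z = y + e" "0 < \<omega> {y, y + e}" by blast
  then have "w (shift y \<omega>) = w (shift z \<omega>)" using g unfolding good_def by blast
  then show ?case using step(3) by simp
qed

definition At :: "real \<Rightarrow> 'n env set" where
  "At t = {\<omega>. \<exists>x. x \<in> inf_cluster \<omega> \<and> w (shift x \<omega>) \<le> t}"

lemma At_meas: "At t \<in> sets Q"
proof -
  have m: "{\<omega>. w (shift x \<omega>) \<le> t} \<in> sets Q" for x
  proof -
    have "{\<omega> \<in> space Q. w (shift x \<omega>) \<le> t} \<in> sets Q" by measurable
    then show ?thesis by (simp add: spQ)
  qed
  have "At t = (\<Union>x. {\<omega>. x \<in> inf_cluster \<omega>} \<inter> {\<omega>. w (shift x \<omega>) \<le> t})"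
    unfolding At_def by auto
  also have "\<dots> \<in> sets Q" using m infcl_measQ by (intro sets.countable_UN) auto
  finally show ?thesis .
qed

lemma At_inv: "shift y -` At t \<inter> space Q = At t"
proof -
  have "\<omega> \<in> At t \<longleftrightarrow> shift y \<omega> \<in> At t" for \<omega>
  proof
    assume "\<omega> \<in> At t"
    then obtain x where x: "x \<in> inf_cluster \<omega>" "w (shift x \<omega>) \<le> t" unfolding At_def by blast
    have "(x - y) \<in> inf_cluster (shift y \<omega>)" using x(1) by (simp add: inf_cluster_shift)
    moreover have "w (shift (x - y) (shift y \<omega>)) \<le> t" using x(2) by (simp add: shift_shift)
    ultimately show "shift y \<omega> \<in> At t" unfolding At_def by blast
  next
    assume "shift y \<omega> \<in> At t"
    then obtain x where x: "x \<in> inf_cluster (shift y \<omega>)" "w (shift x (shift y \<omega>)) \<le> t" unfolding At_def by blast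
    then have "x + y \<in> inf_cluster \<omega>" "w (shift (x + y) \<omega>) \<le> t"
      by (simp_all add: inf_cluster_shift shift_shift)
    then show "\<omega> \<in> At t" unfolding At_def by blast
  qed
  then show ?thesis using spQ by auto
qed

lemma At_good:
  "AE \<omega> in Q. 0 \<in> inf_cluster \<omega> \<longrightarrow> (\<omega> \<in> At t \<longleftrightarrow> u \<omega> \<le> t)"
  using good_AE uniq
proof eventually_elim
  case (elim \<omega>)
  show ?case
  proof
    assume z: "0 \<in> inf_cluster \<omega>"
    then have wu: "w \<omega> = u \<omega>" unfolding w_def Ir_def by simp
    show "\<omega> \<in> At t \<longleftrightarrow> u \<omega> \<le> t"
    proof
      assume "u \<omega> \<le> t"
      then show "\<omega> \<in> At t" unfolding At_def using z wu by (intro CollectI exI[of _ 0]) simp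
    next
      assume "\<omega> \<in> At t"
      then obtain x where x: "x \<in> inf_cluster \<omega>" "w (shift x \<omega>) \<le> t" unfolding At_def by blast
      have i1: "infinite (cluster_of \<omega> x)" using x(1) unfolding inf_cluster_def by simp
      have i0: "infinite (cluster_of \<omega> 0)" using z unfolding inf_cluster_def by simp
      from elim(2) have "\<exists>!K. K \<in> range (cluster_of \<omega>) \<and> infinite K"
        unfolding unique_infinite_cluster_def .
      then obtain K where uK: "\<And>K'. K' \<in> range (cluster_of \<omega>) \<and> infinite K' \<Longrightarrow> K' = K"
        by (auto elim!: ex1E)
      have "cluster_of \<omega> x = K" using i1 by (intro uK) simp
      moreover have "cluster_of \<omega> 0 = K" using i0 by (intro uK) simp
      ultimately have "cluster_of \<omega> x = cluster_of \<omega> 0" by simp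
      moreover have "x \<in> cluster_of \<omega> x" unfolding cluster_of_def by simp
      ultimately have "(0, x) \<in> (open_adj \<omega>)\<^sup>*" unfolding cluster_of_def by simp
      from path_const[OF elim(1) this] have "w \<omega> = w (shift x \<omega>)" by simp
      then show "u \<omega> \<le> t" using x(2) wu by simp
    qed
  qed
qed

lemma Ir_meas_enn[measurable]: "(\<lambda>\<omega>. ennreal (Ir \<omega>)) \<in> borel_measurable Q"
  by measurable

lemma AE_mu: "(AE \<omega> in mu Q. P \<omega>) \<longleftrightarrow> (AE \<omega> in Q. 0 \<in> inf_cluster \<omega> \<longrightarrow> P \<omega>)"
  unfolding mu_eq by (subst AE_density[OF Ir_meas_enn]) (simp add: Ir_def indicator_def)

lemma dich: "(AE \<omega> in mu Q. u \<omega> \<le> t) \<or> (AE \<omega> in mu Q. t < u \<omega>)"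
proof -
  have E: "\<forall>A \<in> sets Q. (\<forall>x. shift x -` A \<inter> space Q = A) \<longrightarrow>
      prob_space.prob Q A = 0 \<or> prob_space.prob Q A = 1"
    using erg unfolding shift_ergodic_def .
  have "prob_space.prob Q (At t) = 0 \<or> prob_space.prob Q (At t) = 1"
    using bspec[OF E At_meas] At_inv by simp
  then show ?thesis
  proof
    assume "prob_space.prob Q (At t) = 0"
    then have "AE \<omega> in Q. \<omega> \<notin> At t" using prob_space.prob_eq_0[OF Qp At_meas] by simp
    then have "AE \<omega> in mu Q. t < u \<omega>" unfolding AE_mu using At_good[of t]
      by eventually_elim auto
    then show ?thesis by simp
  next
    assume "prob_space.prob Q (At t) = 1"
    then have "AE \<omega> in Q. \<omega> \<in> At t" by (rule prob_space.AE_prob_1[OF Qp])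
    then have "AE \<omega> in mu Q. u \<omega> \<le> t" unfolding AE_mu using At_good[of t]
      by eventually_elim auto
    then show ?thesis by simp
  qed
qed

lemma main_setting: "\<exists>c. AE \<omega> in mu Q. u \<omega> = c"
proof -
  have le1: "emeasure (mu Q) (space (mu Q)) \<le> 1"
  proof -
    have "emeasure (mu Q) (space (mu Q)) = (\<integral>\<^sup>+\<omega>. ennreal (Ir \<omega>) * indicator UNIV \<omega> \<partial>Q)"
      unfolding space_mu unfolding mu_eq by (rule emeasure_density) (simp_all add: spQ[symmetric])
    also have "\<dots> \<le> (\<integral>\<^sup>+\<omega>. 1 \<partial>Q)"
      by (intro nn_integral_mono) (simp add: Ir_def indicator_def)
    also have "\<dots> = emeasure Q (space Q)" by simp
    also have "\<dots> = 1" by (rule prob_space.emeasure_space_1[OF Qp])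
    finally show ?thesis .
  qed
  show ?thesis
  proof (cases "emeasure (mu Q) (space (mu Q)) = 0")
    case True
    have "AE \<omega> in mu Q. u \<omega> = 0"
      by (rule AE_I[where N="space (mu Q)"]) (auto simp: True)
    then show ?thesis by blast
  next
    case False
    have fm: "finite_measure (mu Q)" using le1 by (intro finite_measureI) (auto simp: top_unique)
    interpret mf: finite_measure "mu Q" by (rule fm)
    have umu[measurable]: "u \<in> borel_measurable (mu Q)" by (rule um)
    have ui: "integrable (mu Q) u" by (rule mf.square_integrable_imp_integrable[OF um u2])
    define m where "m = measure (mu Q) (space (mu Q))"
    have mpos: "m > 0" unfolding m_def using False mf.emeasure_eq_measure
      by (metis ennreal_0 measure_nonneg order_le_less)
    define c where "c = integral\<^sup>L (mu Q) u / m"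
    have ic: "integral\<^sup>L (mu Q) u = m * c" unfolding c_def using mpos by simp
    from dich[of c] show ?thesis
    proof
      assume le: "AE \<omega> in mu Q. u \<omega> \<le> c"
      have ci: "integrable (mu Q) (\<lambda>\<omega>. c - u \<omega>)" using ui by simp
      have "integral\<^sup>L (mu Q) (\<lambda>\<omega>. c - u \<omega>) = m * c - integral\<^sup>L (mu Q) u"
        using ui by (simp add: Bochner_Integration.integral_diff m_def)
      also have "\<dots> = 0" using ic by simp
      finally have "AE \<omega> in mu Q. c - u \<omega> = 0"
        using integral_nonneg_eq_0_iff_AE[OF ci] le by (auto elim: AE_mp)
      then have "AE \<omega> in mu Q. u \<omega> = c" by eventually_elim simp
      then show ?thesis by blast
    next
      assume gt: "AE \<omega> in mu Q. c < u \<omega>"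
      have "integral\<^sup>L (mu Q) (\<lambda>\<omega>. c) < integral\<^sup>L (mu Q) u"
        by (rule mf.integral_less_AE_space[OF _ ui gt False]) simp
      then have "m * c < m * c" using ic by (simp add: m_def)
      then show ?thesis by simp
    qed
  qed
qed

end
theorem mainTheorem7:
  fixes Q :: "('n::finite) env measure" and c0 :: real and u :: "'n env \<Rightarrow> real"
  assumes "CARD('n) \<ge> 2"
    and "c0 > 0"
    and "prob_space Q"
    and "sets Q = sets borel"
    and "emeasure Q (Omega c0) = 1"
    and "shift_invariant Q"
    and "shift_ergodic Q"
    and "AE \<omega> in Q. unique_infinite_cluster \<omega>"
    and "u \<in> borel_measurable (mu Q)"
    and "integrable (mu Q) (\<lambda>\<omega>. (u \<omega>)\<^sup>2)"
    and "\<And>\<psi> e. continuous_on (Omega c0) \<psi> \<Longrightarrow> e \<in> unit_dirs \<Longrightarrow>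
           integral\<^sup>L (mu Q) (\<lambda>\<omega>. u \<omega> * nabla_star (\<lambda>\<omega>' e'. \<psi> \<omega>' * (if e = e' then 1 else 0)) \<omega>) = 0"
  shows "\<exists>c. AE \<omega> in mu Q. u \<omega> = c"
  proof -
  interpret setting Q c0 u by (rule setting.intro) (fact assms)+
  show ?thesis by (rule main_setting)
qed

end
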